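(* Let $f$ be a 3-CNF formula with clauses $C_1,\dots,C_m$ over variables $x_1,\dots,x_n$, each clause being a disjunction of three literal occurrences. Let $H$ be the graph constructed as follows: for each clause $C_i=x\vee y\vee z$ introduce six vertices $x^{(i,1)},y^{(i,1)},z^{(i,1)},x^{(i,2)},y^{(i,2)},z^{(i,2)}$ inducing a subgraph $H_i$ which is the complete graph on these six vertices minus the three edges $x^{(i,1)}x^{(i,2)}$, $y^{(i,1)}y^{(i,2)}$, $z^{(i,1)}z^{(i,2)}$; the vertices $x^{(i,1)},y^{(i,1)},z^{(i,1)}$ are associated with the literals $x,y,z$ of $C_i$. Additionally, for any two vertices $u,v$ lying in different subgraphs $H_i\neq H_j$, both associated with literals, such that the literal associated with $u$ is the negation of the literal associated with $v$, add the edge $uv$. There are no other edges. Then $\mathrm{diss}(H)=2m$, and $f$ is satisfiable if and only if $\mathrm{diss}(H)=\alpha(H)$.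
   Context: All graphs are finite, simple and undirected. A set $I$ of vertices of a graph $G$ is a dissociation set if the induced subgraph $G[I]$ has maximum degree at most $1$; $\mathrm{diss}(G)$ is the maximum order of a dissociation set in $G$. $\alpha(G)$ is the independence number. *)

theory Defs
  imports Main
begin

definition dissociation_set :: "'a set \<Rightarrow> ('a \<Rightarrow> 'a \<Rightarrow> bool) \<Rightarrow> 'a set \<Rightarrow> bool" where
  "dissociation_set V E I \<longleftrightarrow> I \<subseteq> V \<and> (\<forall>v\<in>I. card {u\<in>I. E v u} \<le> 1)"

definition diss :: "'a set \<Rightarrow> ('a \<Rightarrow> 'a \<Rightarrow> bool) \<Rightarrow> nat" where
  "diss V E = Max (card ` {I. dissociation_set V E I})"

definition independent_set :: "'a set \<Rightarrow> ('a \<Rightarrow> 'a \<Rightarrow> bool) \<Rightarrow> 'a set \<Rightarrow> bool" where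
  "independent_set V E I \<longleftrightarrow> I \<subseteq> V \<and> (\<forall>u\<in>I. \<forall>v\<in>I. \<not> E u v)"

definition alpha :: "'a set \<Rightarrow> ('a \<Rightarrow> 'a \<Rightarrow> bool) \<Rightarrow> nat" where
  "alpha V E = Max (card ` {I. independent_set V E I})"

(* 3-CNF: a literal is (variable index, polarity); True = positive. *)
type_synonym lit = "nat \<times> bool"
type_synonym clause = "lit \<times> lit \<times> lit"

definition neg_lit :: "lit \<Rightarrow> lit" where
  "neg_lit l = (fst l, \<not> snd l)"

definition lit_true :: "(nat \<Rightarrow> bool) \<Rightarrow> lit \<Rightarrow> bool" where
  "lit_true a l \<longleftrightarrow> a (fst l) = snd l"

definition clause_lit :: "clause \<Rightarrow> nat \<Rightarrow> lit" where
  "clause_lit c p = (case c of (x, y, z) \<Rightarrow> if p = 0 then x else if p = 1 then y else z)"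

definition satisfiable :: "clause list \<Rightarrow> bool" where
  "satisfiable f \<longleftrightarrow> (\<exists>a. \<forall>c\<in>set f. \<exists>p<3. lit_true a (clause_lit c p))"

(* Vertices (i, p, k): clause i < m (0-based), position p < 3, copy k \<in> {1,2}.
   Vertex (i,p,1) is associated with literal clause_lit (f!i) p. *)
definition H_verts :: "clause list \<Rightarrow> (nat \<times> nat \<times> nat) set" where
  "H_verts f = {(i, p, k). i < length f \<and> p < 3 \<and> (k = 1 \<or> k = 2)}"

definition H_adj :: "clause list \<Rightarrow> (nat \<times> nat \<times> nat) \<Rightarrow> (nat \<times> nat \<times> nat) \<Rightarrow> bool" where
  "H_adj f u v \<longleftrightarrow> u \<in> H_verts f \<and> v \<in> H_verts f \<and> u \<noteq> v \<and>
     (case u of (i, p, k) \<Rightarrow> case v of (j, q, l) \<Rightarrow>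
        (i = j \<and> p \<noteq> q) \<or>
        (i \<noteq> j \<and> k = 1 \<and> l = 1 \<and> clause_lit (f ! i) p = neg_lit (clause_lit (f ! j) q)))"

end

theory Submission imports Defs begin

definition blk :: "nat \<Rightarrow> (nat \<times> nat \<times> nat) set" where
  "blk i = {(i', p, k). i' = i \<and> p < 3 \<and> (k = 1 \<or> k = 2)}"

lemma finite_H: "finite (H_verts f)"
proof -
  have "H_verts f \<subseteq> {..<length f} \<times> {..<3} \<times> {..<3}"
    unfolding H_verts_def by auto
  thus ?thesis by (rule finite_subset) auto
qed

lemma H_decomp: "I \<subseteq> H_verts f \<Longrightarrow> I = (\<Union>i<length f. I \<inter> blk i)"
  unfolding H_verts_def blk_def by auto

lemma card_decomp: assumes "I \<subseteq> H_verts f"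
  shows "card I = (\<Sum>i<length f. card (I \<inter> blk i))"
proof -
  have fin: "finite I" using assms finite_H finite_subset by blast
  have e: "(\<Union>i<length f. I \<inter> blk i) = I" using H_decomp[OF assms] by (rule sym)
  have "card I = card (\<Union>i<length f. I \<inter> blk i)" by (simp only: e)
  also have "... = (\<Sum>i<length f. card (I \<inter> blk i))"
    by (rule card_UN_disjoint) (auto simp: blk_def intro: finite_subset[OF _ fin])
  finally show ?thesis .
qed

lemma three_elems:
  assumes "finite J" "card J \<ge> 3"
  obtains a b c where "a \<in> J" "b \<in> J" "c \<in> J" "a \<noteq> b" "a \<noteq> c" "b \<noteq> c"
proof -
  have "J \<noteq> {}" using assms by auto
  then obtain a where a: "a \<in> J" by auto
  have c1: "card (J - {a}) \<ge> 2" using assms a by (simp add: card_Diff_singleton)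
  hence "J - {a} \<noteq> {}" by (metis card.empty not_numeral_le_zero)
  then obtain b where b: "b \<in> J - {a}" by auto
  have "card (J - {a} - {b}) \<ge> 1" using c1 b assms by (simp add: card_Diff_singleton)
  hence "J - {a} - {b} \<noteq> {}" by (metis card.empty not_one_le_zero)
  then obtain c where c: "c \<in> J - {a} - {b}" by auto
  show ?thesis using that a b c by auto
qed

lemma diss_blk:
  assumes D: "dissociation_set (H_verts f) (H_adj f) I"
  shows "card (I \<inter> blk i) \<le> 2"
proof (rule ccontr)
  assume "\<not> ?thesis"
  hence c3: "card (I \<inter> blk i) \<ge> 3" by simp
  have IV: "I \<subseteq> H_verts f" and deg: "\<forall>v\<in>I. card {u\<in>I. H_adj f v u} \<le> 1"
    using D unfolding dissociation_set_def by auto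
  have fin: "finite I" using IV finite_H finite_subset by blast
  obtain a b c where abc: "a \<in> I \<inter> blk i" "b \<in> I \<inter> blk i" "c \<in> I \<inter> blk i"
    "a \<noteq> b" "a \<noteq> c" "b \<noteq> c"
    using three_elems[OF _ c3] fin by blast
  obtain p1 k1 where a: "a = (i,p1,k1)" "k1 = 1 \<or> k1 = 2" using abc(1) unfolding blk_def by auto
  obtain p2 k2 where b: "b = (i,p2,k2)" "k2 = 1 \<or> k2 = 2" using abc(2) unfolding blk_def by auto
  obtain p3 k3 where c: "c = (i,p3,k3)" "k3 = 1 \<or> k3 = 2" using abc(3) unfolding blk_def by auto
  have V: "a \<in> H_verts f" "b \<in> H_verts f" "c \<in> H_verts f" using abc IV by auto
  have key: "\<exists>v\<in>I. \<exists>x y. x \<noteq> y \<and> x \<in> I \<and> y \<in> I \<and> H_adj f v x \<and> H_adj f v y"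
  proof (cases "p1 \<noteq> p2 \<and> p1 \<noteq> p3")
    case True
    then show ?thesis using abc V a b c
      by (intro bexI[of _ a] exI[of _ b] exI[of _ c]) (auto simp: H_adj_def)
  next
    case False
    show ?thesis
    proof (cases "p1 = p2")
      case True
      then have "p3 \<noteq> p1" using abc a b c by auto
      then show ?thesis using True abc V a b c
        by (intro bexI[of _ c] exI[of _ a] exI[of _ b]) (auto simp: H_adj_def)
    next
      case F2: False
      then have "p1 = p3" using False by auto
      then show ?thesis using F2 abc V a b c
        by (intro bexI[of _ b] exI[of _ a] exI[of _ c]) (auto simp: H_adj_def)
    qed
  qed
  then obtain v x y where v: "v \<in> I" "x \<noteq> y" "x \<in> I" "y \<in> I" "H_adj f v x" "H_adj f v y"
    by blast
  have "{x,y} \<subseteq> {u\<in>I. H_adj f v u}" using v by auto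
  hence "card {x,y} \<le> card {u\<in>I. H_adj f v u}" by (rule card_mono[rotated]) (use fin in auto)
  then show False using deg v by auto
qed

lemma diss_le: "dissociation_set (H_verts f) (H_adj f) I \<Longrightarrow> card I \<le> 2 * length f"
proof -
  assume D: "dissociation_set (H_verts f) (H_adj f) I"
  hence IV: "I \<subseteq> H_verts f" unfolding dissociation_set_def by auto
  have "card I = (\<Sum>i<length f. card (I \<inter> blk i))" by (rule card_decomp[OF IV])
  also have "... \<le> (\<Sum>i<length f. 2)" by (rule sum_mono) (rule diss_blk[OF D])
  finally show ?thesis by simp
qed

lemma indep_diss: "independent_set V E I \<Longrightarrow> dissociation_set V E I"
proof -
  assume "independent_set V E I"
  hence "\<And>v. v \<in> I \<Longrightarrow> {u\<in>I. E v u} = {}" unfolding independent_set_def by auto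
  thus ?thesis using \<open>independent_set V E I\<close> unfolding independent_set_def dissociation_set_def by (metis card.empty zero_le)
qed

lemma fin_sets: "finite (card ` {I. dissociation_set (H_verts f) (H_adj f) I})"
    "finite (card ` {I. independent_set (H_verts f) (H_adj f) I})"
proof -
  have "{I. dissociation_set (H_verts f) (H_adj f) I} \<subseteq> Pow (H_verts f)"
    "{I. independent_set (H_verts f) (H_adj f) I} \<subseteq> Pow (H_verts f)"
    unfolding dissociation_set_def independent_set_def by auto
  thus "finite (card ` {I. dissociation_set (H_verts f) (H_adj f) I})"
    "finite (card ` {I. independent_set (H_verts f) (H_adj f) I})"
    using finite_H by (meson finite_Pow_iff finite_imageI finite_subset)+
qed

lemma diss_eq: "diss (H_verts f) (H_adj f) = 2 * length f"
proof -
  define D where "D = (\<lambda>(i,p). (i,p,2::nat)) ` ({..<length f} \<times> {..<2::nat})"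
  have cD: "card D = 2 * length f" unfolding D_def
    by (subst card_image) (auto simp: inj_on_def)
  have dD: "dissociation_set (H_verts f) (H_adj f) D"
    unfolding dissociation_set_def
  proof
    show "D \<subseteq> H_verts f" unfolding D_def H_verts_def by auto
    show "\<forall>v\<in>D. card {u \<in> D. H_adj f v u} \<le> 1"
    proof
      fix v assume "v \<in> D"
      then obtain i p where v: "v = (i,p,2)" "p < 2" unfolding D_def by auto
      have "{u \<in> D. H_adj f v u} \<subseteq> {(i, 1 - p, 2)}"
        using v unfolding D_def H_adj_def by auto
      hence "card {u \<in> D. H_adj f v u} \<le> card {(i, 1 - p, 2::nat)}"
        by (rule card_mono[rotated]) auto
      thus "card {u \<in> D. H_adj f v u} \<le> 1" by simp
    qed
  qed
  show ?thesis unfolding diss_def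
    by (rule Max_eqI[OF fin_sets(1)]) (use diss_le dD cD in \<open>auto intro: image_eqI[of _ _ D]\<close>)
qed

lemma alpha_le: "alpha (H_verts f) (H_adj f) \<le> 2 * length f"
proof -
  have "{} \<in> {I. independent_set (H_verts f) (H_adj f) I}" by (simp add: independent_set_def)
  hence "card ` {I. independent_set (H_verts f) (H_adj f) I} \<noteq> {}" by blast
  from Max_in[OF fin_sets(2) this] obtain I where
    "independent_set (H_verts f) (H_adj f) I" "alpha (H_verts f) (H_adj f) = card I"
    unfolding alpha_def by auto
  thus ?thesis using diss_le indep_diss by metis
qed

lemma lit_neg: "lit_true a l \<Longrightarrow> lit_true a (neg_lit l) \<Longrightarrow> False"
  unfolding lit_true_def neg_lit_def by auto

lemma sat_alpha:
  assumes "satisfiable f" shows "alpha (H_verts f) (H_adj f) = 2 * length f"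
proof -
  obtain a where a: "\<forall>c\<in>set f. \<exists>p<3. lit_true a (clause_lit c p)"
    using assms unfolding satisfiable_def by auto
  define P where "P i = (SOME p. p < 3 \<and> lit_true a (clause_lit (f!i) p))" for i
  have P: "P i < 3 \<and> lit_true a (clause_lit (f!i) (P i))" if "i < length f" for i
  proof -
    have "\<exists>p<3. lit_true a (clause_lit (f!i) p)" using a that by auto
    thus ?thesis unfolding P_def by (rule someI_ex[where P="\<lambda>p. p < 3 \<and> _ p"]) 
  qed
  define I where "I = (\<lambda>(i,k). (i, P i, k)) ` ({..<length f} \<times> {1,2::nat})"
  have cI: "card I = 2 * length f" unfolding I_def
    by (subst card_image) (auto simp: inj_on_def)
  have iI: "independent_set (H_verts f) (H_adj f) I"
    unfolding independent_set_def
  proof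
    show "I \<subseteq> H_verts f" unfolding I_def H_verts_def using P by auto
    show "\<forall>u\<in>I. \<forall>v\<in>I. \<not> H_adj f u v"
    proof (intro ballI notI)
      fix u v assume u: "u \<in> I" and v: "v \<in> I" and e: "H_adj f u v"
      obtain i k where u': "u = (i, P i, k)" "i < length f" using u unfolding I_def by auto
      obtain j l where v': "v = (j, P j, l)" "j < length f" using v unfolding I_def by auto
      have "i \<noteq> j \<and> clause_lit (f ! i) (P i) = neg_lit (clause_lit (f ! j) (P j))"
        using e u' v' unfolding H_adj_def by auto
      then show False using P[OF u'(2)] P[OF v'(2)] lit_neg by metis
    qed
  qed
  show ?thesis using alpha_le[of f] unfolding alpha_def
    using Max_ge[OF fin_sets(2), of "card I"] iI cI by fastforce
qed

lemma indep_blk: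
  assumes D: "independent_set (H_verts f) (H_adj f) I" and c: "card (I \<inter> blk i) = 2"
    and i: "i < length f"
  shows "\<exists>p<3. (i,p,1) \<in> I"
proof -
  obtain x y where xy: "I \<inter> blk i = {x,y}" "x \<noteq> y" using c card_2_iff by metis
  have ind: "\<forall>u\<in>I. \<forall>v\<in>I. \<not> H_adj f u v" using D unfolding independent_set_def by auto
  obtain p1 k1 where a: "x = (i,p1,k1)" "k1 = 1 \<or> k1 = 2" "p1 < 3" "x \<in> I"
    using xy unfolding blk_def by blast
  obtain p2 k2 where b: "y = (i,p2,k2)" "k2 = 1 \<or> k2 = 2" "p2 < 3" "y \<in> I"
    using xy unfolding blk_def by blast
  have "\<not> H_adj f x y" using ind a b by auto
  hence "p1 = p2" using a b xy i unfolding H_adj_def H_verts_def by auto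
  thus ?thesis using a b xy by auto
qed

lemma alpha_sat:
  assumes "alpha (H_verts f) (H_adj f) = 2 * length f" shows "satisfiable f"
proof -
  have "{} \<in> {I. independent_set (H_verts f) (H_adj f) I}" by (simp add: independent_set_def)
  hence "card ` {I. independent_set (H_verts f) (H_adj f) I} \<noteq> {}" by blast
  from Max_in[OF fin_sets(2) this] obtain I where
    D: "independent_set (H_verts f) (H_adj f) I" and cI: "card I = 2 * length f"
    using assms unfolding alpha_def by auto
  have IV: "I \<subseteq> H_verts f" using D unfolding independent_set_def by auto
  have ind: "\<forall>u\<in>I. \<forall>v\<in>I. \<not> H_adj f u v" using D unfolding independent_set_def by auto
  have all2: "card (I \<inter> blk i) = 2" if i: "i < length f" for i
  proof (rule ccontr)
    assume ne: "card (I \<inter> blk i) \<noteq> 2"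
    have le: "\<forall>j\<in>{..<length f}. card (I \<inter> blk j) \<le> 2"
      using diss_blk[OF indep_diss[OF D]] by auto
    have "(\<Sum>j<length f. card (I \<inter> blk j)) < (\<Sum>j<length f. 2)"
      by (rule sum_strict_mono_ex1) (use le ne i in \<open>force intro!: bexI[of _ i]\<close>)+
    thus False using card_decomp[OF IV] cI by simp
  qed
  define a where "a x = (\<exists>i<length f. \<exists>p<3. (i,p,1) \<in> I \<and> clause_lit (f!i) p = (x,True))" for x
  show ?thesis unfolding satisfiable_def
  proof (intro exI[of _ a] ballI)
    fix c assume "c \<in> set f"
    then obtain i where i: "i < length f" "c = f ! i" by (auto simp: in_set_conv_nth)
    obtain p where p: "p < 3" "(i,p,1) \<in> I" using indep_blk[OF D all2[OF i(1)] i(1)] by auto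
    obtain x b where l: "clause_lit (f!i) p = (x,b)" by fastforce
    have "lit_true a (x,b)"
    proof (cases b)
      case True
      then show ?thesis using l i p unfolding lit_true_def a_def by auto
    next
      case False
      have "\<not> a x"
      proof
        assume "a x"
        then obtain j q where j: "j < length f" "q < 3" "(j,q,1) \<in> I" "clause_lit (f!j) q = (x,True)"
          unfolding a_def by auto
        have "H_adj f (i,p,1) (j,q,1)"
          using i j p l False IV unfolding H_adj_def neg_lit_def by auto
        thus False using ind p j by auto
      qed
      then show ?thesis using False unfolding lit_true_def by auto
    qed
    thus "\<exists>p<3. lit_true a (clause_lit c p)" using p l i by auto
  qed
qed

theorem mainTheorem9:
  fixes f :: "clause list"
  shows "diss (H_verts f) (H_adj f) = 2 * length f \<and>
         (satisfiable f \<longleftrightarrow> diss (H_verts f) (H_adj f) = alpha (H_verts f) (H_adj f))"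
  using diss_eq sat_alpha alpha_sat by metis

end
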